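(* Let $0<p\le 1$, $\epsilon>0$, $m\ge1$, let $\mathcal{C}\subseteq\mathbb{R}^m$ be a nonempty closed convex set, and let $f_p(\boldsymbol{z};\epsilon)=\sum_{i=1}^{m}(z_i^2+\epsilon^2)^{p/2}$. Consider the problem $\mathscr{P}_{\mathrm{sm}}(\epsilon)$: minimize $f_p(\boldsymbol{z};\epsilon)$ over $\boldsymbol{z}\in\mathcal{C}$. Generate a sequence by the iterative reweighted-$\ell_2$ algorithm: start with $\boldsymbol{\omega}^{[0]}=(1,\dots,1)$, and for $n=0,1,2,\dots$ set $$\boldsymbol{z}^{[n+1]}=\arg\min_{\boldsymbol{z}\in\mathcal{C}}\sum_{i=1}^{m}\omega_i^{[n]}z_i^2,\qquad \omega_i^{[n+1]}=\frac{p}{2}\left[\left(z_i^{[n+1]}\right)^2+\epsilon^2\right]^{\frac{p}{2}-1},\ i=1,\dots,m.$$ Then every limit point $\bar{\boldsymbol{z}}$ of $\{\boldsymbol{z}^{[n]}\}_{n\ge1}$ is a KKT point of $\mathscr{P}_{\mathrm{sm}}(\epsilon)$, and $f_p(\boldsymbol{z}^{[n]};\epsilon)$ converges monotonically (nonincreasingly) to $f_p(\boldsymbol{z}^{\star};\epsilon)$ for some KKT point $\boldsymbol{z}^{\star}$ of $\mathscr{P}_{\mathrm{sm}}(\epsilon)$.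
   Context: The normal cone of a convex set $\mathcal{C}$ at $\boldsymbol{z}\in\mathcal{C}$ is $\mathcal{N}_{\mathcal{C}}(\boldsymbol{z})=\{\boldsymbol{s}:\langle\boldsymbol{s},\boldsymbol{x}-\boldsymbol{z}\rangle\le0\ \forall\boldsymbol{x}\in\mathcal{C}\}$. A KKT point of $\mathscr{P}_{\mathrm{sm}}(\epsilon)$ is a point $\boldsymbol{z}\in\mathcal{C}$ with $0\in\nabla_{\boldsymbol{z}}f_p(\boldsymbol{z};\epsilon)+\mathcal{N}_{\mathcal{C}}(\boldsymbol{z})$. *)

theory Defs
  imports "HOL-Analysis.Analysis"
begin

definition fp :: "real \<Rightarrow> real \<Rightarrow> real ^ 'm \<Rightarrow> real" where
  "fp p \<epsilon> z = (\<Sum>i\<in>UNIV. ((z $ i)\<^sup>2 + \<epsilon>\<^sup>2) powr (p / 2))"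

definition normal_cone :: "(real ^ 'm) set \<Rightarrow> real ^ 'm \<Rightarrow> (real ^ 'm) set" where
  "normal_cone C z = {s. \<forall>x\<in>C. s \<bullet> (x - z) \<le> 0}"

text \<open>KKT point of min f over C: z in C and 0 in grad f(z) + N_C(z).
  The gradient is the vector g representing the Frechet derivative of f at z.\<close>
definition kkt_point :: "(real ^ 'm) set \<Rightarrow> (real ^ 'm \<Rightarrow> real) \<Rightarrow> real ^ 'm \<Rightarrow> bool" where
  "kkt_point C f z \<longleftrightarrow> z \<in> C \<and>
     (\<exists>g. (f has_derivative (\<lambda>h. g \<bullet> h)) (at z) \<and> -g \<in> normal_cone C z)"

end

theory Submission
  imports Defs
begin

lemma conc_powr:
  fixes u v a :: real
  assumes "0<u" "0<v" "0\<le>a" "a\<le>1"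
  shows "v powr a \<le> u powr a + a * u powr (a-1) * (v-u)"
proof -
  have Y: "(v powr a) * (u powr (1-a)) \<le> (a * v) + ((1 - a) * u)"
    using Youngs_inequality_0[of a "1-a" v u] assms by simp
  have pos: "u powr (a-1) > 0" using assms by simp
  have e1: "u powr (1-a) * u powr (a-1) = 1"
    using assms by (simp add: powr_add[symmetric])
  have e2: "u * u powr (a-1) = u powr a"
  proof -
    have "u powr (1 + (a-1)) = u powr 1 * u powr (a-1)" by (rule powr_add)
    then show ?thesis using assms by simp
  qed
  have "v powr a = (v powr a * u powr (1-a)) * u powr (a-1)"
    using e1 by (simp add: mult.assoc)
  also have "\<dots> \<le> ((a * v) + ((1 - a) * u)) * u powr (a-1)"
    using Y pos by (intro mult_right_mono) auto
  also have "\<dots> = a * u powr (a-1) * v + (u * u powr (a-1)) - a * (u * u powr (a-1))"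
    by (simp add: algebra_simps)
  also have "\<dots> = u powr a + a * u powr (a-1) * (v-u)"
    unfolding e2 by (simp add: algebra_simps e2[symmetric])
  finally show ?thesis .
qed

lemma VI_min:
  fixes w :: "'m::finite \<Rightarrow> real" and C :: "(real^'m) set"
  assumes "convex C" "z\<in>C" "x\<in>C"
    "\<forall>y\<in>C. (\<Sum>i\<in>UNIV. w i * (z$i)\<^sup>2) \<le> (\<Sum>i\<in>UNIV. w i*(y$i)\<^sup>2)"
  shows "0 \<le> (\<Sum>i\<in>UNIV. w i * z$i * (x$i - z$i))"
proof (rule ccontr)
  define A where "A = (\<Sum>i\<in>UNIV. w i * z$i * (x$i - z$i))"
  define B where "B = (\<Sum>i\<in>UNIV. w i * (x$i - z$i)\<^sup>2)"
  assume "\<not> 0 \<le> (\<Sum>i\<in>UNIV. w i * z$i * (x$i - z$i))"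
  hence A0: "A < 0" by (simp add: A_def)
  define t where "t = min 1 (-A/(\<bar>B\<bar>+1))"
  have t0: "0<t" "t\<le>1" using A0 by (auto simp: t_def divide_neg_pos)
  have tle: "t * (\<bar>B\<bar>+1) \<le> -A"
  proof -
    have "t \<le> -A/(\<bar>B\<bar>+1)" by (simp add: t_def)
    hence "t*(\<bar>B\<bar>+1) \<le> (-A/(\<bar>B\<bar>+1))*(\<bar>B\<bar>+1)" by (rule mult_right_mono) auto
    also have "\<dots> = -A" by (simp add: add_pos_nonneg)
    finally show ?thesis .
  qed
  have "(1-t) *\<^sub>R z + t *\<^sub>R x \<in> C"
    using assms t0 by (intro convexD) auto
  moreover have "(1-t) *\<^sub>R z + t *\<^sub>R x = z + t *\<^sub>R (x - z)"
    by (simp add: algebra_simps)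
  ultimately have inC: "z + t *\<^sub>R (x - z) \<in> C" by simp
  have expand: "(\<Sum>i\<in>UNIV. w i * ((z + t *\<^sub>R (x - z))$i)\<^sup>2)
      = (\<Sum>i\<in>UNIV. w i * (z$i)\<^sup>2) + 2*t*A + t\<^sup>2*B"
  proof -
    have "(\<Sum>i\<in>UNIV. w i * ((z + t *\<^sub>R (x - z))$i)\<^sup>2)
        = (\<Sum>i\<in>UNIV. w i * (z$i)\<^sup>2 + (2*t) * (w i * z$i * (x$i - z$i)) + t\<^sup>2 * (w i * (x$i - z$i)\<^sup>2))"
      by (intro sum.cong) (auto simp: power2_eq_square algebra_simps)
    also have "\<dots> = (\<Sum>i\<in>UNIV. w i * (z$i)\<^sup>2) + 2*t*A + t\<^sup>2*B"
      by (simp add: sum.distrib sum_distrib_left A_def B_def)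
    finally show ?thesis .
  qed
  have "0 \<le> 2*t*A + t\<^sup>2*B" using assms(4) inC expand by force
  hence "0 \<le> t * (2*A + t*B)" by (simp add: power2_eq_square algebra_simps)
  hence h: "0 \<le> 2*A + t*B" using t0 by (simp add: zero_le_mult_iff)
  have "t*B \<le> t*\<bar>B\<bar>" using t0 by (intro mult_left_mono) auto
  moreover have "t*(\<bar>B\<bar>+1) = t*\<bar>B\<bar> + t" by (simp add: algebra_simps)
  ultimately have "t*B < -A" using tle t0 by linarith
  with h A0 show False by linarith
qed

lemma fp_deriv:
  fixes y :: "real^'m"
  assumes "0 < \<epsilon>"
  shows "(fp p \<epsilon> has_derivative
     (\<lambda>h. (\<chi> i. p/2*((y$i)\<^sup>2+\<epsilon>\<^sup>2) powr (p/2-1)*(2*y$i)) \<bullet> h)) (at y)"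
proof -
  have d1: "((\<lambda>t. (t\<^sup>2+\<epsilon>\<^sup>2) powr (p/2)) has_real_derivative
       p/2*((t)\<^sup>2+\<epsilon>\<^sup>2) powr (p/2-1)*(2*t)) (at t)" for t :: real
  proof -
    have pos: "0 < t\<^sup>2+\<epsilon>\<^sup>2" using assms by (simp add: add_nonneg_pos)
    have "((\<lambda>t. t\<^sup>2+\<epsilon>\<^sup>2) has_real_derivative 2*t) (at t)"
      by (auto intro!: derivative_eq_intros)
    from DERIV_chain2[OF has_real_derivative_powr[OF pos, of "p/2"] this]
    show ?thesis by (simp add: algebra_simps)
  qed
  have d2: "((\<lambda>y. ((y$i)\<^sup>2+\<epsilon>\<^sup>2) powr (p/2)) has_derivative
        (\<lambda>h. h$i * (p/2*((y$i)\<^sup>2+\<epsilon>\<^sup>2) powr (p/2-1)*(2*y$i)))) (at y)" for i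
    by (rule DERIV_compose_FDERIV[OF d1 bounded_linear_imp_has_derivative[OF bounded_linear_vec_nth]])
  have "((\<lambda>y. \<Sum>i\<in>UNIV. ((y$i)\<^sup>2+\<epsilon>\<^sup>2) powr (p/2)) has_derivative
        (\<lambda>h. \<Sum>i\<in>UNIV. h$i * (p/2*((y$i)\<^sup>2+\<epsilon>\<^sup>2) powr (p/2-1)*(2*y$i)))) (at y)"
    by (rule has_derivative_sum) (rule d2)
  moreover have "(\<lambda>h. \<Sum>i\<in>UNIV. h$i * (p/2*((y$i)\<^sup>2+\<epsilon>\<^sup>2) powr (p/2-1)*(2*y$i)))
      = (\<lambda>h. (\<chi> i. p/2*((y$i)\<^sup>2+\<epsilon>\<^sup>2) powr (p/2-1)*(2*y$i)) \<bullet> h)"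
    by (auto simp: inner_vec_def mult.commute)
  ultimately show ?thesis unfolding fp_def[abs_def] by simp
qed


lemma abs_bound:
  fixes x p e M :: real
  assumes "0 < p" "((x\<^sup>2+e\<^sup>2) powr (p/2)) \<le> M"
  shows "\<bar>x\<bar> \<le> M powr (1/p)"
proof (cases "x = 0")
  case True
  then show ?thesis by simp
next
  case False
  hence ax: "\<bar>x\<bar> > 0" by simp
  have "x\<^sup>2 = \<bar>x\<bar> powr 2" using ax by (simp add: powr_realpow)
  hence "(x\<^sup>2) powr (p/2) = (\<bar>x\<bar> powr 2) powr (p/2)" by simp
  also have "\<dots> = \<bar>x\<bar> powr (2 * (p/2))" by (rule powr_powr)
  finally have "(x\<^sup>2) powr (p/2) = \<bar>x\<bar> powr p" by simp
  moreover have "(x\<^sup>2) powr (p/2) \<le> (x\<^sup>2+e\<^sup>2) powr (p/2)"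
    using assms by (intro powr_mono2) auto
  ultimately have h: "\<bar>x\<bar> powr p \<le> M" using assms by linarith
  have "\<bar>x\<bar> = (\<bar>x\<bar> powr p) powr (1/p)" using assms ax by (simp add: powr_powr)
  also have "\<dots> \<le> M powr (1/p)" using h assms by (intro powr_mono2) auto
  finally show ?thesis .
qed

theorem theorem2:
  fixes p \<epsilon> :: real
    and C :: "(real ^ 'm) set"
    and z \<omega> :: "nat \<Rightarrow> real ^ 'm"
  assumes "0 < p" "p \<le> 1" "0 < \<epsilon>"
    and "C \<noteq> {}" "closed C" "convex C"
    and "\<omega> 0 = (\<chi> i. 1)"
    and "\<And>n. z (Suc n) \<in> C \<and>
           (\<forall>y\<in>C. (\<Sum>i\<in>UNIV. \<omega> n $ i * (z (Suc n) $ i)\<^sup>2) \<le> (\<Sum>i\<in>UNIV. \<omega> n $ i * (y $ i)\<^sup>2))"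
    and "\<And>n i. \<omega> (Suc n) $ i = p / 2 * ((z (Suc n) $ i)\<^sup>2 + \<epsilon>\<^sup>2) powr (p / 2 - 1)"
  shows "(\<forall>zbar r. strict_mono r \<and> (\<forall>k. 1 \<le> r k) \<and> (z \<circ> r) \<longlonglongrightarrow> zbar
             \<longrightarrow> kkt_point C (fp p \<epsilon>) zbar)
       \<and> (\<forall>n\<ge>1. fp p \<epsilon> (z (Suc n)) \<le> fp p \<epsilon> (z n))
       \<and> (\<exists>zstar. kkt_point C (fp p \<epsilon>) zstar \<and>
             (\<lambda>n. fp p \<epsilon> (z n)) \<longlonglongrightarrow> fp p \<epsilon> zstar)"
proof -
  define f :: "real^'m \<Rightarrow> real" where "f = fp p \<epsilon>"
  have fdef: "\<And>y::real^'m. f y = (\<Sum>i\<in>UNIV. ((y$i)\<^sup>2+\<epsilon>\<^sup>2) powr (p/2))"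
    by (simp add: f_def fp_def)
  have posb: "\<And>x::real. 0 < x\<^sup>2 + \<epsilon>\<^sup>2" using assms(3) by (simp add: add_nonneg_pos)
  have zC: "z n \<in> C" if n1: "n \<ge> 1" for n
  proof -
    obtain m where "n = Suc m" using n1 by (cases n) auto
    thus ?thesis using assms(8) by simp
  qed
  have wdef: "\<omega> n $ i = p/2*((z n$i)\<^sup>2+\<epsilon>\<^sup>2) powr (p/2-1)" if n1: "n \<ge> 1" for n i
  proof -
    obtain m where "n = Suc m" using n1 by (cases n) auto
    thus ?thesis using assms(9) by simp
  qed
  have wpos: "0 \<le> \<omega> n $ i" if "n \<ge> 1" for n i
    unfolding wdef[OF that] using assms(1) by simp
  have descent: "(\<Sum>i\<in>UNIV. \<omega> n$i * (z n$i - z (Suc n)$i)\<^sup>2) \<le> f (z n) - f (z (Suc n))"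
    if n: "n \<ge> 1" for n
  proof -
    have VI: "0 \<le> (\<Sum>i\<in>UNIV. \<omega> n$i * z (Suc n)$i * (z n$i - z (Suc n)$i))"
      using assms(8)[of n] zC[OF n] by (intro VI_min[OF assms(6)]) auto
    have conc: "((z (Suc n)$i)\<^sup>2+\<epsilon>\<^sup>2) powr (p/2) \<le> ((z n$i)\<^sup>2+\<epsilon>\<^sup>2) powr (p/2)
        + \<omega> n$i * ((z (Suc n)$i)\<^sup>2 - (z n$i)\<^sup>2)" for i
    proof -
      have h: "((z (Suc n)$i)\<^sup>2+\<epsilon>\<^sup>2) powr (p/2) \<le> ((z n$i)\<^sup>2+\<epsilon>\<^sup>2) powr (p/2)
        + p/2 * ((z n$i)\<^sup>2+\<epsilon>\<^sup>2) powr (p/2-1) * (((z (Suc n)$i)\<^sup>2+\<epsilon>\<^sup>2) - ((z n$i)\<^sup>2+\<epsilon>\<^sup>2))"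
        using assms(1,2) posb by (intro conc_powr) auto
      have e: "((z (Suc n)$i)\<^sup>2+\<epsilon>\<^sup>2) - ((z n$i)\<^sup>2+\<epsilon>\<^sup>2) = (z (Suc n)$i)\<^sup>2 - (z n$i)\<^sup>2" by simp
      show ?thesis using h unfolding wdef[OF n, of i] e .
    qed
    have "f (z (Suc n)) \<le> (\<Sum>i\<in>UNIV. ((z n$i)\<^sup>2+\<epsilon>\<^sup>2) powr (p/2)
        + \<omega> n$i * ((z (Suc n)$i)\<^sup>2 - (z n$i)\<^sup>2))"
      unfolding fdef by (intro sum_mono conc)
    also have "\<dots> = f (z n) + (\<Sum>i\<in>UNIV. \<omega> n$i * ((z (Suc n)$i)\<^sup>2 - (z n$i)\<^sup>2))"
      by (simp add: sum.distrib fdef)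
    finally have A: "f (z (Suc n)) \<le> f (z n) + (\<Sum>i\<in>UNIV. \<omega> n$i * ((z (Suc n)$i)\<^sup>2 - (z n$i)\<^sup>2))" .
    have "(\<Sum>i\<in>UNIV. \<omega> n$i * (z n$i - z (Suc n)$i)\<^sup>2)
        = (\<Sum>i\<in>UNIV. - (\<omega> n$i * ((z (Suc n)$i)\<^sup>2 - (z n$i)\<^sup>2)) - 2 * (\<omega> n$i * z (Suc n)$i * (z n$i - z (Suc n)$i)))"
      by (intro sum.cong) (auto simp: power2_eq_square algebra_simps)
    also have "\<dots> = - (\<Sum>i\<in>UNIV. \<omega> n$i * ((z (Suc n)$i)\<^sup>2 - (z n$i)\<^sup>2))
         - 2 * (\<Sum>i\<in>UNIV. \<omega> n$i * z (Suc n)$i * (z n$i - z (Suc n)$i))"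
      by (simp add: sum_subtractf sum_negf sum_distrib_left)
    finally show ?thesis using A VI by linarith
  qed
  have mono: "f (z (Suc n)) \<le> f (z n)" if "n \<ge> 1" for n
  proof -
    have "0 \<le> (\<Sum>i\<in>UNIV. \<omega> n$i * (z n$i - z (Suc n)$i)\<^sup>2)"
      using wpos[OF that] by (intro sum_nonneg) auto
    thus ?thesis using descent[OF that] by linarith
  qed
  have fnn: "0 \<le> f y" for y :: "real^'m" unfolding fdef by (intro sum_nonneg) auto
  define g where "g n = f (z (Suc n))" for n
  have gdec: "decseq g" unfolding g_def by (intro decseq_SucI mono) simp
  have gnn: "\<forall>i. 0 \<le> g i" using fnn by (simp add: g_def)
  obtain L where gL: "g \<longlonglongrightarrow> L" using decseq_convergent[OF gdec gnn] by blast
  define M where "M = f (z 1)"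
  define B where "B = M powr (1/p)"
  have fM: "f (z n) \<le> M" if n1: "n \<ge> 1" for n
  proof -
    obtain m where m: "n = Suc m" using n1 by (cases n) auto
    have "g m \<le> g 0" using gdec by (simp add: antimonoD)
    thus ?thesis by (simp add: g_def m M_def)
  qed
  have zB: "\<bar>z n $ i\<bar> \<le> B" if "n \<ge> 1" for n i
  proof -
    have "((z n$i)\<^sup>2+\<epsilon>\<^sup>2) powr (p/2) \<le> f (z n)"
      unfolding fdef by (rule member_le_sum) auto
    hence "((z n$i)\<^sup>2+\<epsilon>\<^sup>2) powr (p/2) \<le> M" using fM[OF that] by linarith
    thus ?thesis unfolding B_def by (rule abs_bound[OF assms(1)])
  qed
  define c where "c = p/2*(B\<^sup>2+\<epsilon>\<^sup>2) powr (p/2-1)"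
  have cpos: "0 < c" using assms(1) posb[of B] unfolding c_def by (intro mult_pos_pos) auto
  have cw: "c \<le> \<omega> n $ i" if "n \<ge> 1" for n i
  proof -
    have "(z n$i)\<^sup>2 \<le> B\<^sup>2"
      using zB[OF that, of i] by (metis abs_ge_zero power2_abs power_mono)
    hence "(B\<^sup>2+\<epsilon>\<^sup>2) powr (p/2-1) \<le> ((z n$i)\<^sup>2+\<epsilon>\<^sup>2) powr (p/2-1)"
      using assms(2) posb by (intro powr_mono2') auto
    thus ?thesis unfolding c_def wdef[OF that] using assms(1) by simp
  qed
  have diff: "(\<lambda>n. z (Suc n)$i - z (Suc (Suc n))$i) \<longlonglongrightarrow> 0" for i
  proof -
    define d where "d n = z (Suc n)$i - z (Suc (Suc n))$i" for n
    have bd: "(d n)\<^sup>2 \<le> (g n - g (Suc n)) / c" for n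
    proof -
      have "c * (d n)\<^sup>2 \<le> \<omega> (Suc n) $ i * (d n)\<^sup>2"
        using cw[of "Suc n" i] by (intro mult_right_mono) auto
      also have "\<dots> \<le> (\<Sum>j\<in>UNIV. \<omega> (Suc n)$j * (z (Suc n)$j - z (Suc (Suc n))$j)\<^sup>2)"
        unfolding d_def using wpos[of "Suc n"] by (intro member_le_sum) (auto simp del: power2_eq_square)
      also have "\<dots> \<le> g n - g (Suc n)" using descent[of "Suc n"] by (simp add: g_def)
      finally show ?thesis using cpos by (simp add: pos_le_divide_eq mult.commute)
    qed
    have "(\<lambda>n. (g n - g (Suc n)) / c) \<longlonglongrightarrow> (L - L) / c"
      by (rule tendsto_divide[OF tendsto_diff[OF gL LIMSEQ_Suc[OF gL]] tendsto_const]) (use cpos in simp)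
    hence t2: "(\<lambda>n. (g n - g (Suc n)) / c) \<longlonglongrightarrow> 0" by simp
    have "(\<lambda>n. (d n)\<^sup>2) \<longlonglongrightarrow> 0"
      by (rule tendsto_sandwich[OF always_eventually always_eventually tendsto_const t2]) (auto intro: bd)
    hence "(\<lambda>n. sqrt ((d n)\<^sup>2)) \<longlonglongrightarrow> sqrt 0" by (rule tendsto_real_sqrt)
    hence "(\<lambda>n. \<bar>d n\<bar>) \<longlonglongrightarrow> 0" by simp
    hence "d \<longlonglongrightarrow> 0" by (rule tendsto_rabs_zero_cancel)
    thus ?thesis by (simp add: d_def[abs_def])
  qed
  have P1: "\<forall>zbar r. strict_mono r \<and> (\<forall>k. 1 \<le> r k) \<and> (z \<circ> r) \<longlonglongrightarrow> zbar
             \<longrightarrow> kkt_point C (fp p \<epsilon>) zbar"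
  proof (intro allI impI)
    fix zbar and r :: "nat \<Rightarrow> nat"
    assume H: "strict_mono r \<and> (\<forall>k. 1 \<le> r k) \<and> (z \<circ> r) \<longlonglongrightarrow> zbar"
    hence sm: "strict_mono r" and r1: "\<And>k. 1 \<le> r k" and lim: "(z \<circ> r) \<longlonglongrightarrow> zbar" by auto
    define s where "s k = r k - 1" for k
    have rs: "r k = Suc (s k)" for k using r1[of k] by (simp add: s_def)
    have sms: "strict_mono s"
      unfolding strict_mono_def
    proof (intro allI impI)
      fix x y :: nat assume "x < y"
      hence "r x < r y" using sm by (simp add: strict_mono_less)
      thus "s x < s y" using rs[of x] rs[of y] by simp
    qed
    have zr: "(\<lambda>k. z (r k)$i) \<longlonglongrightarrow> zbar$i" for i
      using tendsto_vec_nth[OF lim, of i] by (simp add: o_def)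
    have ds: "(\<lambda>k. z (Suc (s k))$i - z (Suc (Suc (s k)))$i) \<longlonglongrightarrow> 0" for i
      using LIMSEQ_subseq_LIMSEQ[OF diff[of i] sms] by (simp add: o_def)
    have zr1: "(\<lambda>k. z (Suc (r k))$i) \<longlonglongrightarrow> zbar$i" for i
    proof -
      have "(\<lambda>k. z (r k)$i - (z (Suc (s k))$i - z (Suc (Suc (s k)))$i)) \<longlonglongrightarrow> zbar$i - 0"
        by (intro tendsto_diff zr ds)
      thus ?thesis by (simp add: rs)
    qed
    have zbarC: "zbar \<in> C"
      by (rule closed_sequentially[OF assms(5) _ lim]) (use zC r1 in auto)
    define G where "G = (\<chi> i. p/2*((zbar$i)\<^sup>2+\<epsilon>\<^sup>2) powr (p/2-1)*(2*zbar$i))"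
    have VIlim: "0 \<le> (\<Sum>i\<in>UNIV. p/2*((zbar$i)\<^sup>2+\<epsilon>\<^sup>2) powr (p/2-1) * zbar$i * (x$i - zbar$i))"
      if x: "x \<in> C" for x
    proof -
      have "(\<lambda>k. \<Sum>i\<in>UNIV. p/2*((z (r k)$i)\<^sup>2+\<epsilon>\<^sup>2) powr (p/2-1) * z (Suc (r k))$i * (x$i - z (Suc (r k))$i))
          \<longlonglongrightarrow> (\<Sum>i\<in>UNIV. p/2*((zbar$i)\<^sup>2+\<epsilon>\<^sup>2) powr (p/2-1) * zbar$i * (x$i - zbar$i))"
      proof -
        have pw: "(\<lambda>k. ((z (r k)$i)\<^sup>2+\<epsilon>\<^sup>2) powr (p/2-1)) \<longlonglongrightarrow> ((zbar$i)\<^sup>2+\<epsilon>\<^sup>2) powr (p/2-1)" for i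
        proof (rule tendsto_powr[OF _ tendsto_const])
          show "(\<lambda>k. (z (r k)$i)\<^sup>2+\<epsilon>\<^sup>2) \<longlonglongrightarrow> (zbar$i)\<^sup>2+\<epsilon>\<^sup>2"
            by (intro tendsto_add tendsto_power zr tendsto_const)
          show "(zbar$i)\<^sup>2+\<epsilon>\<^sup>2 \<noteq> 0" using posb[of "zbar$i"] by linarith
        qed
        show ?thesis by (intro tendsto_sum tendsto_mult tendsto_diff pw zr1 tendsto_const)
      qed
      moreover have "0 \<le> (\<Sum>i\<in>UNIV. p/2*((z (r k)$i)\<^sup>2+\<epsilon>\<^sup>2) powr (p/2-1) * z (Suc (r k))$i * (x$i - z (Suc (r k))$i))" for k
      proof -
        have "0 \<le> (\<Sum>i\<in>UNIV. \<omega> (r k)$i * z (Suc (r k))$i * (x$i - z (Suc (r k))$i))"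
          using assms(8)[of "r k"] x by (intro VI_min[OF assms(6)]) auto
        thus ?thesis using wdef[OF r1[of k]] by simp
      qed
      ultimately show ?thesis by (intro LIMSEQ_le_const) auto
    qed
    show "kkt_point C (fp p \<epsilon>) zbar"
      unfolding kkt_point_def normal_cone_def
    proof (intro conjI exI)
      show "zbar \<in> C" by (rule zbarC)
      show "(fp p \<epsilon> has_derivative (\<lambda>h. G \<bullet> h)) (at zbar)"
        unfolding G_def by (rule fp_deriv[OF assms(3)])
      show "- G \<in> {s. \<forall>x\<in>C. s \<bullet> (x - zbar) \<le> 0}"
      proof (clarify)
        fix x assume x: "x \<in> C"
        have "- G \<bullet> (x - zbar) = - 2 * (\<Sum>i\<in>UNIV. p/2*((zbar$i)\<^sup>2+\<epsilon>\<^sup>2) powr (p/2-1) * zbar$i * (x$i - zbar$i))"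
          unfolding G_def inner_vec_def sum_distrib_left
          by (intro sum.cong) (auto simp: algebra_simps)
        thus "- G \<bullet> (x - zbar) \<le> 0" using VIlim[OF x] by simp
      qed
    qed
  qed
  have P2: "\<forall>n\<ge>1. fp p \<epsilon> (z (Suc n)) \<le> fp p \<epsilon> (z n)" using mono by (simp add: f_def)
  have P3: "\<exists>zstar. kkt_point C (fp p \<epsilon>) zstar \<and> (\<lambda>n. fp p \<epsilon> (z n)) \<longlonglongrightarrow> fp p \<epsilon> zstar"
  proof -
    have "bounded (range (\<lambda>n. z (Suc n)))"
    proof (rule boundedI)
      fix y assume "y \<in> range (\<lambda>n. z (Suc n))"
      then obtain n where y: "y = z (Suc n)" by auto
      have "norm y \<le> (\<Sum>i\<in>UNIV. \<bar>y$i\<bar>)" by (rule norm_le_l1_cart)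
      also have "\<dots> \<le> (\<Sum>i\<in>(UNIV::'m set). B)" unfolding y by (intro sum_mono zB) simp
      finally show "norm y \<le> (\<Sum>i\<in>(UNIV::'m set). B)" .
    qed
    then obtain l r where r: "strict_mono r" and lr: "((\<lambda>n. z (Suc n)) \<circ> r) \<longlonglongrightarrow> l"
      using bounded_imp_convergent_subsequence by blast
    have sm': "strict_mono (\<lambda>k. Suc (r k))"
      using r by (simp add: strict_mono_def)
    have lim': "(z \<circ> (\<lambda>k. Suc (r k))) \<longlonglongrightarrow> l" using lr by (simp add: o_def)
    have "strict_mono (\<lambda>k. Suc (r k)) \<and> (\<forall>k. 1 \<le> Suc (r k)) \<and> (z \<circ> (\<lambda>k. Suc (r k))) \<longlonglongrightarrow> l"
      using sm' lim' by simp
    hence kkt: "kkt_point C (fp p \<epsilon>) l" using P1 by blast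
    have ic: "isCont f l"
      unfolding f_def by (rule has_derivative_continuous[OF fp_deriv[OF assms(3)]])
    have T1: "(\<lambda>k. f (z (Suc (r k)))) \<longlonglongrightarrow> f l"
      using isCont_tendsto_compose[OF ic lim'] by (simp add: o_def)
    have T2: "(\<lambda>k. f (z (Suc (r k)))) \<longlonglongrightarrow> L"
      using LIMSEQ_subseq_LIMSEQ[OF gL r] by (simp add: o_def g_def)
    have "L = f l" by (rule LIMSEQ_unique[OF T2 T1])
    moreover have "(\<lambda>n. f (z n)) \<longlonglongrightarrow> L"
      using gL by (intro LIMSEQ_imp_Suc[of "\<lambda>n. f (z n)"]) (simp add: g_def[abs_def])
    ultimately show ?thesis using kkt by (auto simp: f_def)
  qed
  show ?thesis using P1 P2 P3 by blast
qed

end
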